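(* Let $n\ge1$, let $\Omega\subset\mathbb{R}^n$ be a bounded open set and $\mu$ a finite (signed) Radon measure on $\Omega$. Assume there exist $\theta\in(0,1)$ and sequences $r_k,\varepsilon_k$ with $0<\sqrt n\,r_k\le\varepsilon_k\downarrow0$ such that $$\liminf_{k\to\infty}\int_{\Omega^{\varepsilon_k}}\frac{|\mu(Q_{x,r_k})|^\theta}{r_k^n}\,dx<\infty.$$ Then there exist (at most countably many) points $x^j\in\Omega$ and $m_j\in\mathbb{R}\setminus\{0\}$ such that $\mu=\sum_j m_j\delta_{x^j}$ and $$\sum_j|m_j|^\theta\le\liminf_{k\to\infty}\int_{\Omega^{\varepsilon_k}}\frac{|\mu(Q_{x,r_k})|^\theta}{r_k^n}\,dx.$$
   Context: $Q_{x,r}:=x+[0,r)^n$ for $x\in\mathbb{R}^n$, $r>0$. $\Omega^\varepsilon:=\{x\in\Omega:\operatorname{dist}(x,\mathbb{R}^n\setminus\Omega)>\varepsilon\}$, so that $Q_{x,r}\subset\Omega$ whenever $x\in\Omega^\varepsilon$ and $\sqrt n\,r\le\varepsilon$. *)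

theory Defs
  imports "HOL-Analysis.Analysis"
begin

definition cube :: "'a::euclidean_space \<Rightarrow> real \<Rightarrow> 'a set" where
  "cube x r = {y. \<forall>b\<in>Basis. x \<bullet> b \<le> y \<bullet> b \<and> y \<bullet> b < x \<bullet> b + r}"

definition inner_set :: "'a::euclidean_space set \<Rightarrow> real \<Rightarrow> 'a set" where
  "inner_set \<Omega> \<epsilon> = {x \<in> \<Omega>. infdist x (UNIV - \<Omega>) > \<epsilon>}"

text \<open>Finite signed measure given by its Jordan decomposition mu = M1 - M2.\<close>
definition signed_meas :: "'a measure \<Rightarrow> 'a measure \<Rightarrow> 'a set \<Rightarrow> real" where
  "signed_meas M1 M2 A = measure M1 A - measure M2 A"

end

theory Submission
  imports Defs
begin
lemma norm_lt_sqrt_dim: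
  fixes v :: "'a::euclidean_space"
  assumes "\<And>b. b \<in> Basis \<Longrightarrow> \<bar>v \<bullet> b\<bar> < r"
  shows "norm v < sqrt (real DIM('a)) * r"
proof -
  obtain b0 where b0: "b0 \<in> (Basis::'a set)" using nonempty_Basis by blast
  have r: "r > 0" using assms[OF b0] by linarith
  have "(norm v)^2 = v \<bullet> v" by (simp add: power2_norm_eq_inner)
  also have "\<dots> = (\<Sum>b\<in>Basis. (v \<bullet> b)^2)" 
    by (subst euclidean_inner) (simp add: power2_eq_square)
  also have "\<dots> < (\<Sum>b\<in>(Basis::'a set). r^2)"
  proof (rule sum_strict_mono)
    fix b :: 'a assume "b \<in> Basis"
    from assms[OF this] show "(v \<bullet> b)^2 < r^2"
      by (metis abs_ge_zero abs_power2 power2_abs power_strict_mono zero_less_numeral)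
  qed (auto)
  also have "\<dots> = (sqrt (real DIM('a)) * r)^2" by (simp add: power_mult_distrib)
  finally have "(norm v)^2 < (sqrt (real DIM('a)) * r)^2" .
  moreover have "0 \<le> sqrt (real DIM('a)) * r" using r by simp
  ultimately show ?thesis by (rule power2_less_imp_less)
qed

lemma cube_dist:
  fixes x :: "'a::euclidean_space"
  assumes "y \<in> cube x r" "z \<in> cube x r"
  shows "dist y z < sqrt (real DIM('a)) * r"
  unfolding dist_norm
proof (rule norm_lt_sqrt_dim)
  fix b :: 'a assume b: "b \<in> Basis"
  with assms have "x \<bullet> b \<le> y \<bullet> b \<and> y \<bullet> b < x \<bullet> b + r" "x \<bullet> b \<le> z \<bullet> b \<and> z \<bullet> b < x \<bullet> b + r"
    by (auto simp: cube_def)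
  then show "\<bar>(y - z) \<bullet> b\<bar> < r" by (simp add: inner_diff_left abs_less_iff)
qed

lemma cube_self: "0 < r \<Longrightarrow> x \<in> cube x r"
  by (auto simp: cube_def)

lemma cube_dist_corner:
  fixes x :: "'a::euclidean_space"
  assumes "y \<in> cube x r"
  shows "dist x y < sqrt (real DIM('a)) * r"
proof -
  have "r > 0" using assms nonempty_Basis by (fastforce simp: cube_def)
  then show ?thesis using cube_dist[OF cube_self assms] by simp
qed

lemma cube_borel[measurable]: "cube x r \<in> sets borel"
  unfolding cube_def by measurable

lemma cube_subset_inner:
  fixes x :: "'a::euclidean_space"
  assumes "x \<in> inner_set \<Omega> e" "sqrt (real DIM('a)) * r \<le> e"
  shows "cube x r \<subseteq> \<Omega>"
proof
  fix y assume y: "y \<in> cube x r"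
  show "y \<in> \<Omega>"
  proof (rule ccontr)
    assume "y \<notin> \<Omega>"
    then have "infdist x (UNIV - \<Omega>) \<le> dist x y" by (intro infdist_le) auto
    with assms cube_dist_corner[OF y] show False by (auto simp: inner_set_def)
  qed
qed

lemma infdist_ge_bound:
  assumes "A \<noteq> {}" "\<And>z. z \<in> A \<Longrightarrow> e \<le> dist x z"
  shows "e \<le> infdist x A"
  using assms by (simp add: infdist_notempty le_cINF_iff)

lemma preimage_cube_eq:
  fixes y :: "'a::euclidean_space"
  shows "{x. y \<in> cube x r} = {x. \<forall>b\<in>Basis. y \<bullet> b - r < x \<bullet> b \<and> x \<bullet> b \<le> y \<bullet> b}"
  by (auto simp: cube_def)

lemma emeasure_preimage_cube:
  fixes y :: "'a::euclidean_space"
  assumes "0 < r"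
  shows "emeasure lborel {x. y \<in> cube x r} = ennreal (r ^ DIM('a))"
proof -
  let ?l = "y - r *\<^sub>R One" 
  have sub1: "box ?l y \<subseteq> {x. y \<in> cube x r}"
  proof
    fix x assume "x \<in> box ?l y"
    then have "\<forall>b\<in>Basis. y \<bullet> b - r < x \<bullet> b \<and> x \<bullet> b < y \<bullet> b"
      by (simp add: mem_box inner_diff_left)
    then show "x \<in> {x. y \<in> cube x r}" by (force simp: cube_def)
  qed
  have sub2: "{x. y \<in> cube x r} \<subseteq> cbox ?l y"
  proof
    fix x assume "x \<in> {x. y \<in> cube x r}"
    then have "\<forall>b\<in>Basis. y \<bullet> b - r \<le> x \<bullet> b \<and> x \<bullet> b \<le> y \<bullet> b"
      by (force simp: cube_def)
    then show "x \<in> cbox ?l y" by (simp add: mem_box inner_diff_left)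
  qed
  have eq1: "emeasure lborel (box ?l y) = ennreal (r ^ DIM('a))"
    using assms by (simp add: emeasure_lborel_box_eq inner_diff_left prod_constant)
  have eq2: "emeasure lborel (cbox ?l y) = ennreal (r ^ DIM('a))"
    using assms by (simp add: emeasure_lborel_cbox_eq inner_diff_left prod_constant)
  have meas: "{x. y \<in> cube x r} \<in> sets lborel"
    unfolding cube_def by measurable
  show ?thesis
    using emeasure_mono[OF sub1 meas] emeasure_mono[OF sub2, of lborel] eq1 eq2
    by (auto intro: antisym)
qed

lemma cube_pair_sets:
  fixes r :: real
  assumes "sets N = sets (borel :: 'a::euclidean_space measure)"
  shows "{p :: 'a \<times> 'a. snd p \<in> cube (fst p) r} \<in> sets (lborel \<Otimes>\<^sub>M N)"
proof -
  note [measurable_cong] = assms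
  have sp: "space N = UNIV" using sets_eq_imp_space_eq[OF assms] by simp
  have eq: "{p::'a\<times>'a. snd p \<in> cube (fst p) r} = {p \<in> space (lborel \<Otimes>\<^sub>M N). \<forall>b\<in>Basis. fst p \<bullet> b \<le> snd p \<bullet> b \<and> snd p \<bullet> b < fst p \<bullet> b + r}"
    by (auto simp: cube_def space_pair_measure sp)
  show ?thesis by (subst eq) measurable
qed

lemma measurable_cube_measure:
  fixes N :: "'a::euclidean_space measure"
  assumes "sets N = sets borel" "finite_measure N"
  shows "(\<lambda>x. emeasure N (cube x r)) \<in> borel_measurable lborel"
    and "(\<lambda>x. measure N (cube x r)) \<in> borel_measurable lborel"
proof -
  interpret finite_measure N by fact
  have *: "(\<lambda>x. emeasure N (Pair x -` {p. snd p \<in> cube (fst p) r})) \<in> borel_measurable lborel"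
    by (rule measurable_emeasure_Pair[OF cube_pair_sets[OF assms(1)]])
  show "(\<lambda>x. emeasure N (cube x r)) \<in> borel_measurable lborel"
    using * by (simp add: vimage_def)
  then show "(\<lambda>x. measure N (cube x r)) \<in> borel_measurable lborel"
    by (simp add: measure_def)
qed

lemma tonelli_cube:
  fixes N :: "'a::euclidean_space measure"
  assumes "sets N = sets borel" "finite_measure N" "G \<in> sets borel"
  shows "(\<integral>\<^sup>+ x. indicator G x * emeasure N (cube x r) \<partial>lborel)
        = (\<integral>\<^sup>+ y. emeasure lborel (G \<inter> {x. y \<in> cube x r}) \<partial>N)"
proof -
  interpret N: finite_measure N by fact
  interpret P: pair_sigma_finite lborel N
    by (simp add: N.sigma_finite_measure_axioms lborel.sigma_finite_measure_axioms pair_sigma_finite.intro)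
  let ?C = "{p :: 'a \<times> 'a. snd p \<in> cube (fst p) r}"
  let ?f = "\<lambda>p. indicator G (fst p) * indicator ?C p :: ennreal"
  have fm: "?f \<in> borel_measurable (lborel \<Otimes>\<^sub>M N)"
    using cube_pair_sets[OF assms(1), of r] assms(3) by measurable
  have sG[measurable]: "G \<in> sets lborel" using assms(3) by simp
  have sN: "cube x r \<in> sets N" for x using assms(1) by simp
  have "(\<integral>\<^sup>+ x. indicator G x * emeasure N (cube x r) \<partial>lborel)
      = (\<integral>\<^sup>+ x. (\<integral>\<^sup>+ y. ?f (x, y) \<partial>N) \<partial>lborel)"
  proof (rule nn_integral_cong)
    fix x
    have "(\<integral>\<^sup>+ y. ?f (x, y) \<partial>N) = (\<integral>\<^sup>+ y. indicator G x * indicator (cube x r) y \<partial>N)"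
      by (intro nn_integral_cong) (auto simp: indicator_def)
    also have "\<dots> = indicator G x * emeasure N (cube x r)"
      using sN by (simp add: nn_integral_cmult_indicator)
    finally show "indicator G x * emeasure N (cube x r) = (\<integral>\<^sup>+ y. ?f (x, y) \<partial>N)" by simp
  qed
  also have "\<dots> = (\<integral>\<^sup>+ y. (\<integral>\<^sup>+ x. ?f (x, y) \<partial>lborel) \<partial>N)"
    using P.Fubini[OF fm] by simp
  also have "\<dots> = (\<integral>\<^sup>+ y. emeasure lborel (G \<inter> {x. y \<in> cube x r}) \<partial>N)"
  proof (rule nn_integral_cong)
    fix y
    have ms: "G \<inter> {x. y \<in> cube x r} \<in> sets lborel" using sG unfolding cube_def by measurable
    have "(\<integral>\<^sup>+ x. ?f (x, y) \<partial>lborel) = (\<integral>\<^sup>+ x. indicator (G \<inter> {x. y \<in> cube x r}) x \<partial>lborel)"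
      by (intro nn_integral_cong) (auto simp: indicator_def)
    also have "\<dots> = emeasure lborel (G \<inter> {x. y \<in> cube x r})" using ms by simp
    finally show "(\<integral>\<^sup>+ x. ?f (x, y) \<partial>lborel) = emeasure lborel (G \<inter> {x. y \<in> cube x r})" .
  qed
  finally show ?thesis .
qed

lemma shrink_lim:
  fixes N :: "'a::euclidean_space measure"
  assumes "sets N = sets borel" "finite_measure N" "decseq A" "\<And>j. A j \<in> sets borel"
    "measure N (\<Inter>j. A j) < c"
  shows "\<exists>j. measure N (A j) < c"
proof -
  interpret finite_measure N by fact
  have "(\<lambda>j. measure N (A j)) \<longlonglongrightarrow> measure N (\<Inter>j. A j)"
    by (rule finite_Lim_measure_decseq) (use assms in auto)
  from order_tendstoD(2)[OF this assms(5)] show ?thesis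
    by (meson eventually_sequentially order_refl)
qed

lemma shrink_closed:
  fixes N :: "'a::euclidean_space measure"
  assumes "sets N = sets borel" "finite_measure N" "closed K" "K \<noteq> {}" "e > 0"
  shows "\<exists>\<delta>>0. measure N {y. infdist y K < \<delta>} < measure N K + e"
proof -
  define A where "A j = {y. infdist y K < 1 / Suc j}" for j :: nat
  have dec: "decseq A"
  proof (rule decseq_SucI)
    fix j
    have h: "1 / real (Suc (Suc j)) \<le> 1 / real (Suc j)" by (intro divide_left_mono) auto
    show "A (Suc j) \<subseteq> A j"
    proof
      fix y assume "y \<in> A (Suc j)"
      then show "y \<in> A j" unfolding A_def mem_Collect_eq using h by linarith
    qed
  qed
  have sA: "A j \<in> sets borel" for j
  proof -
    have "open (A j)" unfolding A_def
      by (rule open_Collect_less) (auto intro: continuous_intros)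
    then show ?thesis by simp
  qed
  have I: "(\<Inter>j. A j) = K"
  proof
    show "K \<subseteq> (\<Inter>j. A j)" by (auto simp: A_def)
    show "(\<Inter>j. A j) \<subseteq> K"
    proof
      fix y assume y: "y \<in> (\<Inter>j. A j)"
      have "infdist y K \<le> 0"
      proof (rule field_le_epsilon)
        fix t :: real assume "t > 0"
        then obtain j :: nat where "1 / Suc j < t" using nat_approx_posE by blast
        have "y \<in> A j" using y by blast
        then have "infdist y K < 1 / real (Suc j)" unfolding A_def by blast
        with \<open>1 / Suc j < t\<close> show "infdist y K \<le> 0 + t" by linarith
      qed
      then have "infdist y K = 0" using infdist_nonneg antisym by blast
      then show "y \<in> K" using in_closed_iff_infdist_zero[OF assms(3,4)] by simp
    qed
  qed
  have "measure N (\<Inter>j. A j) < measure N K + e" using I assms(5) by simp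
  from shrink_lim[OF assms(1,2) dec sA this] obtain j where "measure N (A j) < measure N K + e" by blast
  then show ?thesis by (intro exI[of _ "1 / Suc j"]) (auto simp: A_def)
qed

lemma ball_minus_small:
  fixes N :: "'a::euclidean_space measure"
  assumes "sets N = sets borel" "finite_measure N" "E \<in> sets borel" "measure N ({z} - E) < a"
  shows "\<exists>\<delta>>0. measure N (ball z \<delta> - E) < a"
proof -
  define A where "A j = ball z (1 / Suc j) - E" for j :: nat
  have dec: "decseq A"
  proof (rule decseq_SucI)
    fix j
    have h: "1 / real (Suc (Suc j)) \<le> 1 / real (Suc j)" by (intro divide_left_mono) auto
    show "A (Suc j) \<subseteq> A j"
    proof
      fix y assume "y \<in> A (Suc j)"
      then show "y \<in> A j" unfolding A_def using h by auto
    qed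
  qed
  have sA: "A j \<in> sets borel" for j using assms(3) unfolding A_def by simp
  have I: "(\<Inter>j. A j) = {z} - E"
  proof
    show "{z} - E \<subseteq> (\<Inter>j. A j)" by (auto simp: A_def)
    show "(\<Inter>j. A j) \<subseteq> {z} - E"
    proof
      fix y assume y: "y \<in> (\<Inter>j. A j)"
      have "dist z y \<le> 0"
      proof (rule field_le_epsilon)
        fix t :: real assume "t > 0"
        then obtain j :: nat where "1 / Suc j < t" using nat_approx_posE by blast
        have "y \<in> A j" using y by blast
        then have "dist z y < 1 / real (Suc j)" unfolding A_def by auto
        with \<open>1 / Suc j < t\<close> show "dist z y \<le> 0 + t" by linarith
      qed
      then show "y \<in> {z} - E" using y by (auto simp: A_def)
    qed
  qed
  have "measure N (\<Inter>j. A j) < a" using I assms(4) by simp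
  from shrink_lim[OF assms(1,2) dec sA this] obtain j where "measure N (A j) < a" by blast
  then show ?thesis by (intro exI[of _ "1 / Suc j"]) (auto simp: A_def)
qed

lemma uniform_small:
  fixes N :: "'a::euclidean_space measure"
  assumes sN: "sets N = sets borel" and fN: "finite_measure N" and "bounded \<Omega>" "\<Omega> \<in> sets borel"
    and null: "emeasure N (UNIV - \<Omega>) = 0" and "E \<in> sets borel"
    and small: "\<And>z. measure N ({z} - E) < a"
  shows "\<exists>\<rho>0>0. \<forall>x r. 0 < r \<longrightarrow> sqrt (real DIM('a)) * r < \<rho>0 \<longrightarrow> measure N (cube x r - E) < a"
proof -
  interpret finite_measure N by fact
  have a: "a > 0" using small[of 0] measure_nonneg[of N "{0} - E"] by linarith
  have "\<forall>z. \<exists>\<delta>>0. measure N (ball z \<delta> - E) < a"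
    using ball_minus_small[OF sN fN assms(6) small] by blast
  then obtain d where d: "\<And>z. d z > 0" "\<And>z. measure N (ball z (d z) - E) < a" by metis
  define T where "T = closure \<Omega>"
  have cT: "compact T" unfolding T_def using assms(3) by (simp add: compact_closure)
  obtain C where C: "C \<subseteq> T" "finite C" "T \<subseteq> (\<Union>z\<in>C. ball z (d z / 2))"
    by (rule compactE_image[OF cT, of T "\<lambda>z. ball z (d z / 2)"]) (use d(1) in \<open>auto\<close>)
  define \<rho>0 where "\<rho>0 = (if C = {} then 1 else Min ((\<lambda>z. d z / 2) ` C))"
  have \<rho>0: "\<rho>0 > 0" using C(2) d(1) by (auto simp: \<rho>0_def)
  have \<rho>0le: "\<rho>0 \<le> d z / 2" if "z \<in> C" for z
  proof -
    have "C \<noteq> {}" using that by auto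
    then have "\<rho>0 = Min ((\<lambda>z. d z / 2) ` C)" by (simp add: \<rho>0_def)
    also have "\<dots> \<le> d z / 2" using that C(2) by (intro Min_le) auto
    finally show ?thesis .
  qed
  have "measure N (cube x r - E) < a" if r: "0 < r" "sqrt (real DIM('a)) * r < \<rho>0" for x r
  proof (cases "cube x r \<inter> \<Omega> = {}")
    case True
    then have "cube x r - E \<subseteq> UNIV - \<Omega>" by auto
    then have "measure N (cube x r - E) \<le> measure N (UNIV - \<Omega>)"
      by (intro finite_measure_mono) (use assms(4) sN in auto)
    also have "\<dots> = 0" using null by (simp add: measure_def)
    finally show ?thesis using a by linarith
  next
    case False
    then obtain p where p: "p \<in> cube x r" "p \<in> \<Omega>" by auto
    then have "p \<in> T" unfolding T_def using closure_subset by blast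
    with C(3) obtain z where z: "z \<in> C" "dist z p < d z / 2" by auto
    have "cube x r - E \<subseteq> ball z (d z) - E"
    proof
      fix w assume w: "w \<in> cube x r - E"
      have "dist p w < sqrt (real DIM('a)) * r" using cube_dist[OF p(1)] w by auto
      then have "dist z w < d z" using z \<rho>0le[OF z(1)] r dist_triangle[of z w p] by linarith
      then show "w \<in> ball z (d z) - E" using w by auto
    qed
    then have "measure N (cube x r - E) \<le> measure N (ball z (d z) - E)"
      by (intro finite_measure_mono) (use assms(6) sN in auto)
    also have "\<dots> < a" by (rule d(2))
    finally show ?thesis .
  qed
  then show ?thesis using \<rho>0 by blast
qed

lemma powr_lower_lin:
  fixes s \<eta> \<theta> :: real
  assumes "0 \<le> s" "s < \<eta>" "\<theta> < 1" "0 < \<theta>"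
  shows "\<eta> powr (\<theta> - 1) * s \<le> s powr \<theta>"
proof (cases "s = 0")
  case True then show ?thesis by simp
next
  case False
  then have s: "s > 0" using assms by simp
  have "\<eta> powr (\<theta> - 1) \<le> s powr (\<theta> - 1)"
    by (rule powr_mono2') (use assms s in auto)
  then have "\<eta> powr (\<theta> - 1) * s \<le> s powr (\<theta> - 1) * s" using s by (simp add: mult_right_mono)
  also have "\<dots> = s powr \<theta>" using s by (simp add: powr_diff)
  finally show ?thesis .
qed

lemma ennreal_sub_le:
  fixes I :: ennreal
  assumes "ennreal X \<le> I + ennreal Y" "0 \<le> Y"
  shows "ennreal (X - Y) \<le> I"
proof (cases I)
  case (real i)
  then have "X \<le> i + Y" using assms by (metis ennreal_le_iff ennreal_plus add_nonneg_nonneg)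
  then have "X - Y \<le> i" by simp
  then show ?thesis using real by (simp add: ennreal_leI)
next
  case top then show ?thesis by simp
qed

lemma diffuse_scale:
  fixes B1 B2 :: "'a::euclidean_space measure"
  assumes s1: "sets B1 = sets borel" and f1: "finite_measure B1"
    and s2: "sets B2 = sets borel" and f2: "finite_measure B2"
    and K: "compact K" "K \<noteq> {}" and r: "0 < r"
    and \<rho>: "\<rho> = sqrt (real DIM('a)) * r"
    and Ginner: "\<And>x. infdist x K < \<rho> \<Longrightarrow> x \<in> Inn"
    and Gsmall: "\<And>x. infdist x K < \<rho> \<Longrightarrow> \<bar>measure B1 (cube x r) - measure B2 (cube x r)\<bar> < \<eta>"
    and K2: "measure B2 {y. infdist y K < 2 * \<rho>} \<le> measure B2 K + c / 2"
    and c: "c = measure B1 K - measure B2 K" "c > 0"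
    and \<theta>: "0 < \<theta>" "\<theta> < 1" and \<eta>: "\<eta> > 0"
  shows "ennreal (\<eta> powr (\<theta> - 1) * (c / 2)) \<le>
     (\<integral>\<^sup>+ x \<in> Inn. ennreal (\<bar>measure B1 (cube x r) - measure B2 (cube x r)\<bar> powr \<theta> / r ^ DIM('a)) \<partial>lborel)"
proof -
  interpret B1: finite_measure B1 by fact
  interpret B2: finite_measure B2 by fact
  define n where "n = DIM('a)"
  define G where "G = {x. infdist x K < \<rho>}"
  define K2 where "K2 = {y. infdist y K < 2 * \<rho>}"
  have oG: "open G" unfolding G_def by (rule open_Collect_less) (auto intro: continuous_intros)
  have oK2: "open K2" unfolding K2_def by (rule open_Collect_less) (auto intro: continuous_intros)
  have sG[measurable]: "G \<in> sets borel" using oG by simp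
  have sK: "K \<in> sets borel" using K by (simp add: compact_imp_closed)
  have sK2: "K2 \<in> sets borel" using oK2 by simp
  define f where "f i x = (if i = (1::nat) then measure B1 (cube x r) else measure B2 (cube x r))" for i x
  have fm1[measurable]: "(\<lambda>x. measure B1 (cube x r)) \<in> borel_measurable lborel"
    by (rule measurable_cube_measure(2)[OF s1 f1])
  have fm2[measurable]: "(\<lambda>x. measure B2 (cube x r)) \<in> borel_measurable lborel"
    by (rule measurable_cube_measure(2)[OF s2 f2])
  have rn: "r ^ n > 0" using r by simp
  let ?D = "\<lambda>x. \<bar>measure B1 (cube x r) - measure B2 (cube x r)\<bar>"
  let ?I = "\<integral>\<^sup>+ x. indicator G x * ennreal (?D x) \<partial>lborel"
  have a: "ennreal (r ^ n) * emeasure B1 K \<le> (\<integral>\<^sup>+ x. indicator G x * emeasure B1 (cube x r) \<partial>lborel)"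
  proof -
    have "ennreal (r ^ n) * emeasure B1 K = (\<integral>\<^sup>+ y. ennreal (r ^ n) * indicator K y \<partial>B1)"
      using sK s1 by (simp add: nn_integral_cmult_indicator)
    also have "\<dots> \<le> (\<integral>\<^sup>+ y. emeasure lborel (G \<inter> {x. y \<in> cube x r}) \<partial>B1)"
    proof (rule nn_integral_mono)
      fix y
      show "ennreal (r ^ n) * indicator K y \<le> emeasure lborel (G \<inter> {x. y \<in> cube x r})"
      proof (cases "y \<in> K")
        case True
        have "{x. y \<in> cube x r} \<subseteq> G"
        proof
          fix x assume "x \<in> {x. y \<in> cube x r}"
          then have "dist x y < \<rho>" using cube_dist_corner \<rho> by auto
          moreover have "infdist x K \<le> dist x y" using True by (rule infdist_le)
          ultimately show "x \<in> G" unfolding G_def by simp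
        qed
        then have "G \<inter> {x. y \<in> cube x r} = {x. y \<in> cube x r}" by auto
        then show ?thesis using True emeasure_preimage_cube[OF r, of y] by (simp add: n_def)
      qed simp
    qed
    also have "\<dots> = (\<integral>\<^sup>+ x. indicator G x * emeasure B1 (cube x r) \<partial>lborel)"
      by (rule tonelli_cube[OF s1 f1 sG, symmetric])
    finally show ?thesis .
  qed
  have b: "(\<integral>\<^sup>+ x. indicator G x * emeasure B2 (cube x r) \<partial>lborel) \<le> ennreal (r ^ n) * emeasure B2 K2"
  proof -
    have "(\<integral>\<^sup>+ x. indicator G x * emeasure B2 (cube x r) \<partial>lborel)
        = (\<integral>\<^sup>+ y. emeasure lborel (G \<inter> {x. y \<in> cube x r}) \<partial>B2)"
      by (rule tonelli_cube[OF s2 f2 sG])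
    also have "\<dots> \<le> (\<integral>\<^sup>+ y. ennreal (r ^ n) * indicator K2 y \<partial>B2)"
    proof (rule nn_integral_mono)
      fix y
      show "emeasure lborel (G \<inter> {x. y \<in> cube x r}) \<le> ennreal (r ^ n) * indicator K2 y"
      proof (cases "y \<in> K2")
        case True
        have "emeasure lborel (G \<inter> {x. y \<in> cube x r}) \<le> emeasure lborel {x. y \<in> cube x r}"
          by (rule emeasure_mono) (auto simp: preimage_cube_eq)
        then show ?thesis using True emeasure_preimage_cube[OF r, of y] by (simp add: n_def)
      next
        case False
        have "G \<inter> {x. y \<in> cube x r} = {}"
        proof (rule ccontr)
          assume "G \<inter> {x. y \<in> cube x r} \<noteq> {}"
          then obtain x where x: "x \<in> G" "y \<in> cube x r" by auto
          have "dist x y < \<rho>" using cube_dist_corner x(2) \<rho> by auto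
          moreover have "infdist y K \<le> infdist x K + dist y x" by (rule infdist_triangle)
          ultimately have "y \<in> K2" using x(1) unfolding G_def K2_def by (simp add: dist_commute)
          with False show False by simp
        qed
        then show ?thesis by simp
      qed
    qed
    also have "\<dots> = ennreal (r ^ n) * emeasure B2 K2"
      using sK2 s2 by (simp add: nn_integral_cmult_indicator)
    finally show ?thesis .
  qed
  have ab: "(\<integral>\<^sup>+ x. indicator G x * emeasure B1 (cube x r) \<partial>lborel) \<le>
      ?I + (\<integral>\<^sup>+ x. indicator G x * emeasure B2 (cube x r) \<partial>lborel)"
  proof -
    have "(\<integral>\<^sup>+ x. indicator G x * emeasure B1 (cube x r) \<partial>lborel) \<le>
       (\<integral>\<^sup>+ x. indicator G x * ennreal (?D x) + indicator G x * ennreal (measure B2 (cube x r)) \<partial>lborel)"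
    proof (rule nn_integral_mono)
      fix x
      have "ennreal (measure B1 (cube x r)) \<le> ennreal (?D x + measure B2 (cube x r))"
        by (intro ennreal_leI) linarith
      also have "\<dots> = ennreal (?D x) + ennreal (measure B2 (cube x r))"
        by (intro ennreal_plus) auto
      finally show "indicator G x * emeasure B1 (cube x r) \<le>
         indicator G x * ennreal (?D x) + indicator G x * ennreal (measure B2 (cube x r))"
        by (auto simp: indicator_def B1.emeasure_eq_measure)
    qed
    also have "\<dots> = ?I + (\<integral>\<^sup>+ x. indicator G x * ennreal (measure B2 (cube x r)) \<partial>lborel)"
      by (intro nn_integral_add) auto
    also have "(\<integral>\<^sup>+ x. indicator G x * ennreal (measure B2 (cube x r)) \<partial>lborel)
       = (\<integral>\<^sup>+ x. indicator G x * emeasure B2 (cube x r) \<partial>lborel)"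
      by (simp add: B2.emeasure_eq_measure)
    finally show ?thesis .
  qed
  have I: "ennreal (r ^ n * (c / 2)) \<le> ?I"
  proof -
    have "ennreal (r ^ n * measure B1 K) \<le> ?I + ennreal (r ^ n * (measure B2 K + c / 2))"
    proof -
      have "ennreal (r ^ n * measure B1 K) = ennreal (r ^ n) * emeasure B1 K"
        using rn by (simp add: B1.emeasure_eq_measure ennreal_mult)
      also have "\<dots> \<le> ?I + ennreal (r ^ n) * emeasure B2 K2"
        using a ab b by (meson add_left_mono order_trans)
      also have "ennreal (r ^ n) * emeasure B2 K2 \<le> ennreal (r ^ n * (measure B2 K + c / 2))"
        using K2 rn by (simp add: B2.emeasure_eq_measure ennreal_mult[symmetric] K2_def
            mult_left_mono ennreal_leI)
      finally show ?thesis by (simp add: add_left_mono)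
    qed
    then have "ennreal (r ^ n * measure B1 K - r ^ n * (measure B2 K + c / 2)) \<le> ?I"
      by (rule ennreal_sub_le) (use rn c in auto)
    moreover have "r ^ n * measure B1 K - r ^ n * (measure B2 K + c / 2) = r ^ n * (c / 2)"
      unfolding c(1) by (simp add: field_simps)
    ultimately show ?thesis by simp
  qed
  have "ennreal (\<eta> powr (\<theta> - 1) * (c / 2)) = ennreal (\<eta> powr (\<theta> - 1) / r ^ n) * ennreal (r ^ n * (c / 2))"
  proof -
    have "\<eta> powr (\<theta> - 1) * (c / 2) = (\<eta> powr (\<theta> - 1) / r ^ n) * (r ^ n * (c / 2))"
      using rn r by (simp add: field_simps)
    then show ?thesis using rn c by (simp add: ennreal_mult[symmetric] del: ennreal_mult')
  qed
  also have "\<dots> \<le> ennreal (\<eta> powr (\<theta> - 1) / r ^ n) * ?I"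
    using I by (rule mult_left_mono) simp
  also have "\<dots> = (\<integral>\<^sup>+ x. ennreal (\<eta> powr (\<theta> - 1) / r ^ n) * (indicator G x * ennreal (?D x)) \<partial>lborel)"
    by (rule nn_integral_cmult[symmetric]) auto
  also have "\<dots> \<le> (\<integral>\<^sup>+ x \<in> Inn. ennreal (?D x powr \<theta> / r ^ n) \<partial>lborel)"
  proof (rule nn_integral_mono)
    fix x
    show "ennreal (\<eta> powr (\<theta> - 1) / r ^ n) * (indicator G x * ennreal (?D x)) \<le>
          ennreal (?D x powr \<theta> / r ^ n) * indicator Inn x"
    proof (cases "x \<in> G")
      case True
      then have "x \<in> Inn" using Ginner unfolding G_def by auto
      have "\<eta> powr (\<theta> - 1) * ?D x \<le> ?D x powr \<theta>"
        by (rule powr_lower_lin) (use Gsmall True \<theta> in \<open>auto simp: G_def\<close>)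
      then have "\<eta> powr (\<theta> - 1) / r ^ n * ?D x \<le> ?D x powr \<theta> / r ^ n"
        using rn by (simp add: divide_right_mono)
      then show ?thesis using True \<open>x \<in> Inn\<close> rn
        by (simp add: ennreal_mult[symmetric] ennreal_leI)
    qed simp
  qed
  finally show ?thesis by (simp add: n_def)
qed

definition Fk :: "'a::euclidean_space measure \<Rightarrow> 'a measure \<Rightarrow> 'a set \<Rightarrow> real \<Rightarrow> real \<Rightarrow> real \<Rightarrow> ennreal" where
  "Fk B1 B2 \<Omega> \<theta> e r = (\<integral>\<^sup>+ x \<in> inner_set \<Omega> e.
      ennreal (\<bar>measure B1 (cube x r) - measure B2 (cube x r)\<bar> powr \<theta> / r ^ DIM('a)) \<partial>lborel)"

lemma diffuse_eventually:
  fixes B1 B2 :: "'a::euclidean_space measure"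
  assumes s1: "sets B1 = sets borel" and f1: "finite_measure B1"
    and s2: "sets B2 = sets borel" and f2: "finite_measure B2"
    and n1: "emeasure B1 (UNIV - \<Omega>) = 0" and n2: "emeasure B2 (UNIV - \<Omega>) = 0"
    and \<Omega>: "open \<Omega>" "bounded \<Omega>"
    and K: "compact K" "K \<noteq> {}" "K \<subseteq> \<Omega>"
    and E: "finite E" "E \<inter> K = {}"
    and \<eta>: "\<eta> > 0" and sm1: "\<And>z. measure B1 ({z} - E) < \<eta> / 2" and sm2: "\<And>z. measure B2 ({z} - E) < \<eta> / 2"
    and c: "c = measure B1 K - measure B2 K" "c > 0"
    and \<theta>: "0 < \<theta>" "\<theta> < 1"
    and r: "\<And>k. 0 < r k" and re: "\<And>k. sqrt (real DIM('a)) * r k \<le> \<epsilon> k" and e0: "\<epsilon> \<longlonglongrightarrow> 0"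
  shows "\<exists>N. \<forall>k\<ge>N. ennreal (\<eta> powr (\<theta> - 1) * (c / 2)) \<le> Fk B1 B2 \<Omega> \<theta> (\<epsilon> k) (r k)"
proof -
  interpret B1: finite_measure B1 by fact
  interpret B2: finite_measure B2 by fact
  have cK: "closed K" using K by (simp add: compact_imp_closed)
  have cO: "closed (UNIV - \<Omega>)" using \<Omega> by (simp add: closed_Diff)
  have neO: "UNIV - \<Omega> \<noteq> {}" using \<Omega>(2) not_bounded_UNIV by (metis Diff_eq_empty_iff bounded_subset)
  obtain d0 where d0: "d0 > 0" "\<And>x y. x \<in> K \<Longrightarrow> y \<in> UNIV - \<Omega> \<Longrightarrow> d0 \<le> dist x y"
    using separate_compact_closed[OF K(1) cO] K(3) by blast
  obtain d1 where d1: "d1 > 0" "\<And>x y. x \<in> K \<Longrightarrow> y \<in> E \<Longrightarrow> d1 \<le> dist x y"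
    using separate_compact_closed[OF K(1) finite_imp_closed[OF E(1)]] E(2) by blast
  have sE: "E \<in> sets borel" using E(1) by (simp add: finite_imp_closed)
  have sO: "\<Omega> \<in> sets borel" using \<Omega> by simp
  obtain \<rho>1 where \<rho>1: "\<rho>1 > 0" "\<And>x r. 0 < r \<Longrightarrow> sqrt (real DIM('a)) * r < \<rho>1 \<Longrightarrow> measure B1 (cube x r - E) < \<eta> / 2"
    using uniform_small[OF s1 f1 \<Omega>(2) sO n1 sE sm1] by blast
  obtain \<rho>2 where \<rho>2: "\<rho>2 > 0" "\<And>x r. 0 < r \<Longrightarrow> sqrt (real DIM('a)) * r < \<rho>2 \<Longrightarrow> measure B2 (cube x r - E) < \<eta> / 2"
    using uniform_small[OF s2 f2 \<Omega>(2) sO n2 sE sm2] by blast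
  obtain \<delta> where \<delta>: "\<delta> > 0" "measure B2 {y. infdist y K < \<delta>} < measure B2 K + c / 2"
    using shrink_closed[OF s2 f2 cK K(2), of "c / 2"] c by auto
  define m where "m = min (d0 / 2) (min (d1 / 2) (min \<rho>1 (min \<rho>2 (\<delta> / 2))))"
  have m: "m > 0" using d0 d1 \<rho>1 \<rho>2 \<delta> by (simp add: m_def)
  from order_tendstoD(2)[OF e0 m] obtain N where N: "\<And>k. k \<ge> N \<Longrightarrow> \<epsilon> k < m"
    by (auto simp: eventually_sequentially)
  have "ennreal (\<eta> powr (\<theta> - 1) * (c / 2)) \<le> Fk B1 B2 \<Omega> \<theta> (\<epsilon> k) (r k)" if k: "k \<ge> N" for k
  proof -
    define \<rho> where "\<rho> = sqrt (real DIM('a)) * r k"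
    have \<rho>e: "\<rho> \<le> \<epsilon> k" using re by (simp add: \<rho>_def)
    have \<rho>pos: "\<rho> > 0" using r by (simp add: \<rho>_def)
    have em: "\<epsilon> k < m" using N k by blast
    have near: "\<exists>y\<in>K. dist x y < \<rho>" if "infdist x K < \<rho>" for x
    proof -
      obtain y where "y \<in> K" "infdist x K = dist x y" using infdist_attains_inf[OF cK K(2)] by blast
      then show ?thesis using that by auto
    qed
    have Ginner: "x \<in> inner_set \<Omega> (\<epsilon> k)" if hx: "infdist x K < \<rho>" for x
    proof -
      obtain y where y: "y \<in> K" "dist x y < \<rho>" using near[OF hx] by blast
      have lb: "d0 - \<rho> \<le> dist x z" if "z \<in> UNIV - \<Omega>" for z
        using d0(2)[OF y(1) that] dist_triangle[of y z x] y(2) by (simp add: dist_commute)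
      have "d0 - \<rho> \<le> infdist x (UNIV - \<Omega>)" by (rule infdist_ge_bound[OF neO lb])
      moreover have "d0 - \<rho> > \<epsilon> k" using \<rho>e em by (simp add: m_def)
      moreover have "x \<in> \<Omega>"
      proof (rule ccontr)
        assume "x \<notin> \<Omega>"
        then have "d0 - \<rho> \<le> 0" using lb[of x] by simp
        then show False using \<rho>e em d0 by (simp add: m_def)
      qed
      ultimately show ?thesis by (auto simp: inner_set_def)
    qed
    have Gsmall: "\<bar>measure B1 (cube x (r k)) - measure B2 (cube x (r k))\<bar> < \<eta>" if hx: "infdist x K < \<rho>" for x
    proof -
      obtain y where y: "y \<in> K" "dist x y < \<rho>" using near[OF hx] by blast
      have disj: "cube x (r k) - E = cube x (r k)"
      proof -
        have "w \<notin> E" if "w \<in> cube x (r k)" for w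
        proof
          assume "w \<in> E"
          have "dist x w < \<rho>" using cube_dist_corner[OF that] by (simp add: \<rho>_def)
          then have "dist y w < 2 * \<rho>" using y(2) dist_triangle[of y w x] by (simp add: dist_commute)
          moreover have "d1 \<le> dist y w" using d1(2)[OF y(1) \<open>w \<in> E\<close>] .
          ultimately show False using \<rho>e em by (simp add: m_def)
        qed
        then show ?thesis by auto
      qed
      have "sqrt (real DIM('a)) * r k < \<rho>1" "sqrt (real DIM('a)) * r k < \<rho>2"
        using \<rho>e em by (auto simp: m_def \<rho>_def)
      then have "measure B1 (cube x (r k)) < \<eta> / 2" "measure B2 (cube x (r k)) < \<eta> / 2"
        using \<rho>1(2)[OF r, of k x] \<rho>2(2)[OF r, of k x] disj by auto
      then show ?thesis using measure_nonneg[of B1 "cube x (r k)"] measure_nonneg[of B2 "cube x (r k)"]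
        unfolding abs_less_iff by (intro conjI) linarith+
    qed
    have K2: "measure B2 {y. infdist y K < 2 * \<rho>} \<le> measure B2 K + c / 2"
    proof -
      have "{y. infdist y K < 2 * \<rho>} \<subseteq> {y. infdist y K < \<delta>}" using \<rho>e em by (auto simp: m_def)
      moreover have "{y. infdist y K < \<delta>} \<in> sets B2"
        using s2 by (simp add: open_Collect_less continuous_intros borel_open)
      ultimately have "measure B2 {y. infdist y K < 2 * \<rho>} \<le> measure B2 {y. infdist y K < \<delta>}"
        by (rule B2.finite_measure_mono)
      then show ?thesis using \<delta>(2) by linarith
    qed
    show ?thesis unfolding Fk_def
      by (rule diffuse_scale[OF s1 f1 s2 f2 K(1,2) r \<rho>_def Ginner Gsmall K2 c \<theta> \<eta>])
  qed
  then show ?thesis by blast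
qed

lemma finite_sep:
  fixes E :: "'a::metric_space set"
  assumes "finite E"
  shows "\<exists>ds>0. \<forall>e\<in>E. \<forall>e'\<in>E. e \<noteq> e' \<longrightarrow> ds \<le> dist e e'"
proof -
  define D where "D = insert 1 ((\<lambda>(e, e'). dist e e') ` {p \<in> E \<times> E. fst p \<noteq> snd p})"
  have fD: "finite D" using assms unfolding D_def by auto
  have pD: "\<forall>d\<in>D. d > 0" unfolding D_def by auto
  show ?thesis
  proof (intro exI conjI ballI impI)
    show "Min D > 0" using fD pD by (simp add: D_def)
    fix e e' assume "e \<in> E" "e' \<in> E" "e \<noteq> e'"
    then have "dist e e' \<in> D" unfolding D_def by force
    then show "Min D \<le> dist e e'" using fD by simp
  qed
qed

lemma sum_indicator_disjoint_le:
  fixes c :: "'b \<Rightarrow> ennreal"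
  assumes "finite E" "\<And>e e'. e \<in> E \<Longrightarrow> e' \<in> E \<Longrightarrow> e \<noteq> e' \<Longrightarrow> C e \<inter> C e' = {}"
    and "\<And>e. e \<in> E \<Longrightarrow> x \<in> C e \<Longrightarrow> c e \<le> v"
  shows "(\<Sum>e\<in>E. c e * indicator (C e) x) \<le> v"
proof (cases "\<exists>e\<in>E. x \<in> C e")
  case True
  then obtain e where e: "e \<in> E" "x \<in> C e" by blast
  have "(\<Sum>e\<in>E. c e * indicator (C e) x) = c e * indicator (C e) x + (\<Sum>e'\<in>E - {e}. c e' * indicator (C e') x)"
    by (rule sum.remove[OF assms(1) e(1)])
  also have "(\<Sum>e'\<in>E - {e}. c e' * indicator (C e') x) = 0"
  proof (rule sum.neutral, rule ballI)
    fix e' assume "e' \<in> E - {e}"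
    then have "x \<notin> C e'" using assms(2)[of e e'] e by auto
    then show "c e' * indicator (C e') x = 0" by simp
  qed
  finally show ?thesis using e assms(3) by simp
next
  case False
  then have "(\<Sum>e\<in>E. c e * indicator (C e) x) = 0" by (intro sum.neutral) auto
  then show ?thesis by simp
qed

lemma atoms_eventually:
  fixes B1 B2 :: "'a::euclidean_space measure"
  assumes s1: "sets B1 = sets borel" and f1: "finite_measure B1"
    and s2: "sets B2 = sets borel" and f2: "finite_measure B2"
    and \<Omega>: "open \<Omega>" "bounded \<Omega>"
    and E: "finite E" "E \<subseteq> \<Omega>"
    and \<theta>: "0 < \<theta>" and lam: "0 < lam" "lam < 1"
    and r: "\<And>k. 0 < r k" and re: "\<And>k. sqrt (real DIM('a)) * r k \<le> \<epsilon> k" and e0: "\<epsilon> \<longlonglongrightarrow> 0"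
    and m: "\<And>z. m z = measure B1 {z} - measure B2 {z}"
  shows "\<exists>N. \<forall>k\<ge>N. ennreal (lam powr \<theta> * (\<Sum>e\<in>E. \<bar>m e\<bar> powr \<theta>)) \<le> Fk B1 B2 \<Omega> \<theta> (\<epsilon> k) (r k)"
proof -
  interpret B1: finite_measure B1 by fact
  interpret B2: finite_measure B2 by fact
  have cO: "closed (UNIV - \<Omega>)" using \<Omega> by (simp add: closed_Diff)
  have neO: "UNIV - \<Omega> \<noteq> {}" using \<Omega>(2) not_bounded_UNIV by (metis Diff_eq_empty_iff bounded_subset)
  obtain d0 where d0: "d0 > 0" "\<And>x y. x \<in> E \<Longrightarrow> y \<in> UNIV - \<Omega> \<Longrightarrow> d0 \<le> dist x y"
    using separate_compact_closed[OF finite_imp_compact[OF E(1)] cO] E(2) by blast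
  obtain ds where ds: "ds > 0" "\<And>e e'. e \<in> E \<Longrightarrow> e' \<in> E \<Longrightarrow> e \<noteq> e' \<Longrightarrow> ds \<le> dist e e'"
    using finite_sep[OF E(1)] by blast
  define a where "a z = (1 - lam) * \<bar>m z\<bar> / 2" for z
  have "\<exists>\<delta>>0. m z \<noteq> 0 \<longrightarrow> measure B1 (ball z \<delta> - {z}) < a z \<and> measure B2 (ball z \<delta> - {z}) < a z" for z
  proof (cases "m z = 0")
    case True then show ?thesis by (intro exI[of _ 1]) auto
  next
    case False
    then have az: "a z > 0" using lam by (simp add: a_def)
    obtain \<delta>1 where \<delta>1: "\<delta>1 > 0" "measure B1 (ball z \<delta>1 - {z}) < a z"
      using ball_minus_small[OF s1 f1, of "{z}" z "a z"] az by auto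
    obtain \<delta>2 where \<delta>2: "\<delta>2 > 0" "measure B2 (ball z \<delta>2 - {z}) < a z"
      using ball_minus_small[OF s2 f2, of "{z}" z "a z"] az by auto
    have "measure B1 (ball z (min \<delta>1 \<delta>2) - {z}) \<le> measure B1 (ball z \<delta>1 - {z})"
      by (intro B1.finite_measure_mono) (auto simp: s1)
    moreover have "measure B2 (ball z (min \<delta>1 \<delta>2) - {z}) \<le> measure B2 (ball z \<delta>2 - {z})"
      by (intro B2.finite_measure_mono) (auto simp: s2)
    ultimately show ?thesis using \<delta>1 \<delta>2 by (intro exI[of _ "min \<delta>1 \<delta>2"]) auto
  qed
  then obtain \<delta> where \<delta>: "\<And>z. \<delta> z > 0"
    "\<And>z. m z \<noteq> 0 \<Longrightarrow> measure B1 (ball z (\<delta> z) - {z}) < a z \<and> measure B2 (ball z (\<delta> z) - {z}) < a z"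
    by metis
  define \<delta>m where "\<delta>m = Min (insert 1 (\<delta> ` E))"
  have \<delta>m: "\<delta>m > 0" using E(1) \<delta>(1) by (simp add: \<delta>m_def)
  have \<delta>mle: "\<delta>m \<le> \<delta> e" if "e \<in> E" for e using E(1) that by (simp add: \<delta>m_def)
  define mm where "mm = min (d0 / 2) (min (ds / 2) \<delta>m)"
  have mm: "mm > 0" using d0 ds \<delta>m by (simp add: mm_def)
  from order_tendstoD(2)[OF e0 mm] obtain N where N: "\<And>k. k \<ge> N \<Longrightarrow> \<epsilon> k < mm"
    by (auto simp: eventually_sequentially)
  have "ennreal (lam powr \<theta> * (\<Sum>e\<in>E. \<bar>m e\<bar> powr \<theta>)) \<le> Fk B1 B2 \<Omega> \<theta> (\<epsilon> k) (r k)" if k: "k \<ge> N" for k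
  proof -
    define \<rho> where "\<rho> = sqrt (real DIM('a)) * r k"
    define rr where "rr = r k"
    have rr: "rr > 0" using r by (simp add: rr_def)
    have \<rho>e: "\<rho> \<le> \<epsilon> k" using re by (simp add: \<rho>_def)
    have em: "\<epsilon> k < mm" using N k by blast
    define C where "C e = {x. e \<in> cube x rr}" for e :: 'a
    have Cd: "dist x e < \<rho>" if "x \<in> C e" for x e :: 'a
      using cube_dist_corner[of e x rr] that by (simp add: C_def \<rho>_def rr_def)
    have disj: "C e \<inter> C e' = {}" if "e \<in> E" "e' \<in> E" "e \<noteq> e'" for e e'
    proof (rule ccontr)
      assume "C e \<inter> C e' \<noteq> {}"
      then obtain x where x: "x \<in> C e" "x \<in> C e'" by auto
      have "dist x e < \<rho>" "dist x e' < \<rho>" using Cd[OF x(1)] Cd[OF x(2)] .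
      then have "dist e e' < 2 * \<rho>" using dist_triangle[of e e' x] by (simp add: dist_commute)
      then show False using ds(2)[OF that] \<rho>e em by (simp add: mm_def)
    qed
    have Cin: "x \<in> inner_set \<Omega> (\<epsilon> k)" if "e \<in> E" "x \<in> C e" for e x
    proof -
      have xe: "dist x e < \<rho>" using Cd that(2) .
      have lb: "d0 - \<rho> \<le> dist x z" if "z \<in> UNIV - \<Omega>" for z
        using d0(2)[OF \<open>e \<in> E\<close> that] dist_triangle[of e z x] xe by (simp add: dist_commute)
      have "d0 - \<rho> \<le> infdist x (UNIV - \<Omega>)" by (rule infdist_ge_bound[OF neO lb])
      moreover have "d0 - \<rho> > \<epsilon> k" using \<rho>e em by (simp add: mm_def)
      moreover have "x \<in> \<Omega>"
      proof (rule ccontr)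
        assume "x \<notin> \<Omega>"
        then have "d0 - \<rho> \<le> 0" using lb[of x] by simp
        then show False using \<rho>e em d0 by (simp add: mm_def)
      qed
      ultimately show ?thesis by (auto simp: inner_set_def)
    qed
    have val: "(lam * \<bar>m e\<bar>) powr \<theta> \<le> \<bar>measure B1 (cube x rr) - measure B2 (cube x rr)\<bar> powr \<theta>"
      if "e \<in> E" "x \<in> C e" for e x
    proof (cases "m e = 0")
      case True then show ?thesis by simp
    next
      case False
      have ec: "e \<in> cube x rr" using that(2) by (simp add: C_def)
      have sub: "cube x rr - {e} \<subseteq> ball e (\<delta> e) - {e}"
      proof
        fix w assume w: "w \<in> cube x rr - {e}"
        have "dist e w < \<rho>" using cube_dist[OF ec, of w] w by (simp add: \<rho>_def rr_def)
        moreover have "\<rho> < \<delta> e" using \<rho>e em \<delta>mle[OF that(1)] by (simp add: mm_def)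
        ultimately show "w \<in> ball e (\<delta> e) - {e}" using w by auto
      qed
      have b1: "measure B1 (cube x rr - {e}) < a e"
        using B1.finite_measure_mono[OF sub] \<delta>(2)[OF False] s1 by fastforce
      have b2: "measure B2 (cube x rr - {e}) < a e"
        using B2.finite_measure_mono[OF sub] \<delta>(2)[OF False] s2 by fastforce
      have d1: "measure B1 (cube x rr) = measure B1 {e} + measure B1 (cube x rr - {e})"
        using ec s1 by (subst B1.finite_measure_Diff) auto
      have d2: "measure B2 (cube x rr) = measure B2 {e} + measure B2 (cube x rr - {e})"
        using ec s2 by (subst B2.finite_measure_Diff) auto
      define u where "u = measure B1 (cube x rr - {e})"
      define v where "v = measure B2 (cube x rr - {e})"
      define \<mu> where "\<mu> = measure B1 (cube x rr) - measure B2 (cube x rr)"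
      have uv: "0 \<le> u" "0 \<le> v" by (simp_all add: u_def v_def)
      have me: "m e = \<mu> - (u - v)" using d1 d2 m[of e] by (simp add: u_def v_def \<mu>_def)
      have "\<bar>m e\<bar> \<le> \<bar>\<mu>\<bar> + \<bar>u - v\<bar>" unfolding me by (rule abs_triangle_ineq4)
      moreover have "\<bar>u - v\<bar> \<le> u + v" using uv by simp
      moreover have "u + v < (1 - lam) * \<bar>m e\<bar>" using b1 b2 unfolding a_def u_def v_def by linarith
      moreover have "\<bar>m e\<bar> - (1 - lam) * \<bar>m e\<bar> = lam * \<bar>m e\<bar>" by (simp add: algebra_simps)
      ultimately have "lam * \<bar>m e\<bar> \<le> \<bar>measure B1 (cube x rr) - measure B2 (cube x rr)\<bar>"
        unfolding \<mu>_def by linarith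
      then show ?thesis using lam \<theta> by (intro powr_mono2) auto
    qed
    let ?c = "\<lambda>e. ennreal ((lam * \<bar>m e\<bar>) powr \<theta> / rr ^ DIM('a))"
    have sC: "C e \<in> sets lborel" for e unfolding C_def cube_def by measurable
    have "ennreal (lam powr \<theta> * (\<Sum>e\<in>E. \<bar>m e\<bar> powr \<theta>)) = (\<Sum>e\<in>E. ennreal ((lam * \<bar>m e\<bar>) powr \<theta>))"
      using lam by (subst sum_ennreal) (auto simp: sum_distrib_left powr_mult)
    also have "\<dots> = (\<Sum>e\<in>E. ?c e * emeasure lborel (C e))"
    proof (rule sum.cong[OF refl])
      fix e
      have "emeasure lborel (C e) = ennreal (rr ^ DIM('a))"
        unfolding C_def by (rule emeasure_preimage_cube[OF rr])
      then have "?c e * emeasure lborel (C e) = ?c e * ennreal (rr ^ DIM('a))" by simp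
      also have "\<dots> = ennreal ((lam * \<bar>m e\<bar>) powr \<theta> / rr ^ DIM('a) * rr ^ DIM('a))"
        by (rule ennreal_mult[symmetric]) (use rr in auto)
      also have "\<dots> = ennreal ((lam * \<bar>m e\<bar>) powr \<theta>)" using rr by simp
      finally show "ennreal ((lam * \<bar>m e\<bar>) powr \<theta>) = ?c e * emeasure lborel (C e)" by simp
    qed
    also have "\<dots> = (\<integral>\<^sup>+ x. (\<Sum>e\<in>E. ?c e * indicator (C e) x) \<partial>lborel)"
    proof -
      have "(\<integral>\<^sup>+ x. (\<Sum>e\<in>E. ?c e * indicator (C e) x) \<partial>lborel) = (\<Sum>e\<in>E. (\<integral>\<^sup>+ x. ?c e * indicator (C e) x \<partial>lborel))"
        by (rule nn_integral_sum) (use sC in measurable)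
      also have "\<dots> = (\<Sum>e\<in>E. ?c e * emeasure lborel (C e))"
        by (rule sum.cong[OF refl], rule nn_integral_cmult_indicator[OF sC])
      finally show ?thesis by simp
    qed
    also have "\<dots> \<le> Fk B1 B2 \<Omega> \<theta> (\<epsilon> k) (r k)"
      unfolding Fk_def
    proof (rule nn_integral_mono)
      fix x
      show "(\<Sum>e\<in>E. ?c e * indicator (C e) x) \<le>
        ennreal (\<bar>measure B1 (cube x (r k)) - measure B2 (cube x (r k))\<bar> powr \<theta> / r k ^ DIM('a)) * indicator (inner_set \<Omega> (\<epsilon> k)) x"
      proof (rule sum_indicator_disjoint_le[OF E(1) disj])
        fix e assume "e \<in> E" "x \<in> C e"
        have "(lam * \<bar>m e\<bar>) powr \<theta> / rr ^ DIM('a) \<le> \<bar>measure B1 (cube x rr) - measure B2 (cube x rr)\<bar> powr \<theta> / rr ^ DIM('a)"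
          using val[OF \<open>e \<in> E\<close> \<open>x \<in> C e\<close>] rr by (simp add: divide_right_mono)
        then show "?c e \<le> ennreal (\<bar>measure B1 (cube x (r k)) - measure B2 (cube x (r k))\<bar> powr \<theta> / r k ^ DIM('a)) * indicator (inner_set \<Omega> (\<epsilon> k)) x"
          using Cin[OF \<open>e \<in> E\<close> \<open>x \<in> C e\<close>] by (simp add: rr_def ennreal_leI)
      qed auto
    qed
    finally show ?thesis .
  qed
  then show ?thesis by blast
qed

lemma distr_facts:
  fixes M :: "'a::euclidean_space measure"
  assumes sM: "sets M = sets (restrict_space borel \<Omega>)" and fM: "finite_measure M" and O: "\<Omega> \<in> sets borel"
  defines "B \<equiv> distr M borel (\<lambda>x. x)"
  shows "sets B = sets borel" "finite_measure B"
    "\<And>A. A \<in> sets borel \<Longrightarrow> measure B A = measure M (A \<inter> \<Omega>)"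
    "emeasure B (UNIV - \<Omega>) = 0"
proof -
  interpret finite_measure M by fact
  have sp: "space M = \<Omega>" using sets_eq_imp_space_eq[OF sM] by (simp add: space_restrict_space)
  have mid: "(\<lambda>x. x) \<in> measurable M borel"
  proof -
    have "(\<lambda>x. x) \<in> measurable (restrict_space borel \<Omega>) borel"
      by (rule measurable_restrict_space1) simp
    then show ?thesis using measurable_cong_sets[of M "restrict_space borel \<Omega>" borel borel] sM by simp
  qed
  show "sets B = sets borel" by (simp add: B_def)
  show "finite_measure B" unfolding B_def by (rule finite_measure_distr[OF mid])
  show "measure B A = measure M (A \<inter> \<Omega>)" if "A \<in> sets borel" for A
    unfolding B_def using measure_distr[OF mid that] sp by simp
  show "emeasure B (UNIV - \<Omega>) = 0"
  proof -
    have "(UNIV - \<Omega>) \<inter> space M = {}" using sp by auto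
    then show ?thesis unfolding B_def using emeasure_distr[OF mid, of "UNIV - \<Omega>"] O by simp
  qed
qed

lemma nn_integral_count_space_summable:
  fixes f :: "'a \<Rightarrow> real"
  assumes "f summable_on S" "\<And>x. x \<in> S \<Longrightarrow> 0 \<le> f x"
  shows "(\<integral>\<^sup>+ x. ennreal (f x) \<partial>count_space S) = ennreal (infsum f S)"
proof -
  have "(\<lambda>x. norm (f x)) summable_on S" using assms(1) summable_on_iff_abs_summable_on_real by blast
  then have as: "Infinite_Set_Sum.abs_summable_on f S" using abs_summable_equivalent by blast
  have "(\<integral>\<^sup>+ x. ennreal (f x) \<partial>count_space S) = ennreal (infsetsum f S)"
    by (rule nn_integral_conv_infsetsum[OF as assms(2)])
  also have "infsetsum f S = infsum f S" by (rule infsetsum_infsum[OF as])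
  finally show ?thesis .
qed

lemma countable_additivity:
  fixes B :: "'a::euclidean_space measure"
  assumes sB: "sets B = sets borel" and fB: "finite_measure B" and C: "countable C"
  shows "(\<lambda>z. measure B {z}) summable_on C" "infsum (\<lambda>z. measure B {z}) C = measure B C"
proof -
  interpret finite_measure B by fact
  have "emeasure B C = (\<integral>\<^sup>+x. emeasure B {x} \<partial>count_space C)"
    by (rule emeasure_countable_singleton) (use sB C in auto)
  also have "\<dots> = (\<integral>\<^sup>+x. ennreal (measure B {x}) \<partial>count_space C)"
    by (simp add: emeasure_eq_measure)
  finally have eq: "ennreal (measure B C) = (\<integral>\<^sup>+x. ennreal (measure B {x}) \<partial>count_space C)"
    by (simp add: emeasure_eq_measure)
  have int: "integrable (count_space C) (\<lambda>x. measure B {x})"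
    by (rule integrableI_bounded) (use eq[symmetric] in auto)
  then have as: "Infinite_Set_Sum.abs_summable_on (\<lambda>x. measure B {x}) C" by (simp add: abs_summable_on_def)
  then have "Infinite_Sum.abs_summable_on (\<lambda>x. measure B {x}) C"
    using abs_summable_equivalent[of "\<lambda>x. measure B {x}" C] by simp
  then show su: "(\<lambda>z. measure B {z}) summable_on C"
    using summable_on_iff_abs_summable_on_real by blast
  have "ennreal (measure B C) = ennreal (infsum (\<lambda>z. measure B {z}) C)"
    using eq nn_integral_count_space_summable[OF su] by simp
  then show "infsum (\<lambda>z. measure B {z}) C = measure B C"
    by (simp add: infsum_nonneg)
qed

lemma inner_approx:
  fixes B :: "'a::euclidean_space measure"
  assumes sB: "sets B = sets borel" and fB: "finite_measure B" and A: "A \<in> sets borel" and e: "e > 0"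
  shows "\<exists>K. K \<subseteq> A \<and> compact K \<and> measure B A < measure B K + e"
proof (cases "measure B A < e")
  case True
  then show ?thesis by (intro exI[of _ "{}"]) auto
next
  case False
  interpret finite_measure B by fact
  have "emeasure B A = (SUP K \<in> {K. K \<subseteq> A \<and> compact K}. emeasure B K)"
    by (rule inner_regular[OF sB]) (use A in auto)
  moreover have "ennreal (measure B A - e) < emeasure B A"
    using False e by (simp add: emeasure_eq_measure ennreal_lessI)
  ultimately obtain K where K: "K \<subseteq> A" "compact K" "ennreal (measure B A - e) < emeasure B K"
    by (auto simp: less_SUP_iff)
  then have "measure B A - e < measure B K"
    using False by (simp add: emeasure_eq_measure ennreal_less_iff)
  then show ?thesis using K by (intro exI[of _ K]) auto
qed

lemma finite_approx_atoms:
  fixes B1 B2 :: "'a::euclidean_space measure"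
  assumes s1: "sets B1 = sets borel" and f1: "finite_measure B1"
    and s2: "sets B2 = sets borel" and f2: "finite_measure B2"
    and D: "countable D" and e: "e > 0"
  shows "\<exists>E. finite E \<and> E \<subseteq> D \<and> measure B1 (D - E) < e \<and> measure B2 (D - E) < e"
proof -
  have one: "\<exists>F. finite F \<and> F \<subseteq> D \<and> measure B (D - F) < e"
    if sB: "sets B = sets borel" and fB: "finite_measure B" for B :: "'a measure"
  proof -
    interpret finite_measure B by fact
    obtain F where F: "finite F" "F \<subseteq> D"
      "dist (sum (\<lambda>z. measure B {z}) F) (infsum (\<lambda>z. measure B {z}) D) \<le> e / 2"
      using infsum_finite_approximation[OF countable_additivity(1)[OF sB fB D], of "e / 2"] e by auto
    have "infsum (\<lambda>z. measure B {z}) F = measure B F"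
      by (rule countable_additivity(2)[OF sB fB]) (use F in \<open>simp add: countable_finite\<close>)
    then have sF: "sum (\<lambda>z. measure B {z}) F = measure B F" using F(1) by simp
    have iD: "infsum (\<lambda>z. measure B {z}) D = measure B D" by (rule countable_additivity(2)[OF sB fB D])
    have sD: "D \<in> sets B" using sB D by (simp add: sets.countable)
    have sFs: "F \<in> sets B" using sB F(1) by (simp add: finite_imp_closed)
    have "measure B (D - F) = measure B D - measure B F"
      by (rule finite_measure_Diff[OF sD sFs F(2)])
    also have "\<dots> \<le> e / 2"
    proof -
      have "\<bar>measure B F - measure B D\<bar> \<le> e / 2" using F(3) sF iD by (simp add: dist_real_def)
      then show ?thesis by linarith
    qed
    finally show ?thesis using F e by (intro exI[of _ F]) auto
  qed
  obtain F1 where F1: "finite F1" "F1 \<subseteq> D" "measure B1 (D - F1) < e" using one[OF s1 f1] by blast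
  obtain F2 where F2: "finite F2" "F2 \<subseteq> D" "measure B2 (D - F2) < e" using one[OF s2 f2] by blast
  interpret B1: finite_measure B1 by fact
  interpret B2: finite_measure B2 by fact
  have sD: "D - F1 \<in> sets borel" "D - F2 \<in> sets borel" using D F1 F2 by (auto simp: sets.countable)
  have "measure B1 (D - (F1 \<union> F2)) \<le> measure B1 (D - F1)"
    by (rule B1.finite_measure_mono) (use sD s1 in auto)
  moreover have "measure B2 (D - (F1 \<union> F2)) \<le> measure B2 (D - F2)"
    by (rule B2.finite_measure_mono) (use sD s2 in auto)
  ultimately show ?thesis using F1 F2 by (intro exI[of _ "F1 \<union> F2"]) auto
qed

lemma has_sum_diff_real:
  fixes f g :: "'b \<Rightarrow> real"
  assumes "(f has_sum a) A" "(g has_sum b) A"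
  shows "((\<lambda>x. f x - g x) has_sum (a - b)) A"
proof -
  have "((\<lambda>x. - g x) has_sum (- b)) A" using assms(2) by (simp add: has_sum_uminus)
  from has_sum_add[OF assms(1) this] show ?thesis by simp
qed

lemma measure_restrict_null:
  fixes B :: "'a::euclidean_space measure"
  assumes sB: "sets B = sets borel" and fB: "finite_measure B" and n: "emeasure B (UNIV - \<Omega>) = 0"
    and O: "\<Omega> \<in> sets borel" and A: "A \<in> sets borel"
  shows "measure B (A \<inter> \<Omega>) = measure B A"
proof -
  interpret finite_measure B by fact
  have "measure B A = measure B (A \<inter> \<Omega>) + measure B (A - \<Omega>)"
  proof -
    have eq: "A = (A \<inter> \<Omega>) \<union> (A - \<Omega>)" by auto
    have "measure B ((A \<inter> \<Omega>) \<union> (A - \<Omega>)) = measure B (A \<inter> \<Omega>) + measure B (A - \<Omega>)"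
      by (rule finite_measure_Union) (use sB O A in auto)
    then show ?thesis using eq by simp
  qed
  moreover have "measure B (A - \<Omega>) \<le> measure B (UNIV - \<Omega>)"
    by (rule finite_measure_mono) (use sB O in auto)
  moreover have "measure B (UNIV - \<Omega>) = 0" using n by (simp add: measure_def)
  ultimately show ?thesis using measure_nonneg[of B "A - \<Omega>"] by linarith
qed

lemma Fk_swap: "Fk B2 B1 \<Omega> \<theta> e r = Fk B1 B2 \<Omega> \<theta> e r"
  unfolding Fk_def by (simp add: abs_minus_commute)

lemma diffuse_zero_pos:
  fixes B1 B2 :: "'a::euclidean_space measure"
  assumes s1: "sets B1 = sets borel" and f1: "finite_measure B1"
    and s2: "sets B2 = sets borel" and f2: "finite_measure B2"
    and n1: "emeasure B1 (UNIV - \<Omega>) = 0" and n2: "emeasure B2 (UNIV - \<Omega>) = 0"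
    and \<Omega>: "open \<Omega>" "bounded \<Omega>"
    and \<theta>: "0 < \<theta>" "\<theta> < 1"
    and r: "\<And>k. 0 < r k" and re: "\<And>k. sqrt (real DIM('a)) * r k \<le> \<epsilon> k" and e0: "\<epsilon> \<longlonglongrightarrow> 0"
    and D: "countable D" and Dz: "\<And>z. z \<notin> D \<Longrightarrow> measure B1 {z} = 0 \<and> measure B2 {z} = 0"
    and L: "liminf (\<lambda>k. Fk B1 B2 \<Omega> \<theta> (\<epsilon> k) (r k)) < \<infinity>"
    and A: "A \<in> sets borel" "A \<inter> D = {}"
  shows "measure B1 A - measure B2 A \<le> 0"
proof (rule ccontr)
  interpret B1: finite_measure B1 by fact
  interpret B2: finite_measure B2 by fact
  assume "\<not> ?thesis"
  then have c0: "measure B1 A - measure B2 A > 0" by simp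
  define c0 where "c0 = measure B1 A - measure B2 A"
  have O: "\<Omega> \<in> sets borel" using \<Omega> by simp
  define A' where "A' = A \<inter> \<Omega>"
  have sA': "A' \<in> sets borel" using A O by (simp add: A'_def)
  have mA1: "measure B1 A' = measure B1 A" unfolding A'_def by (rule measure_restrict_null[OF s1 f1 n1 O A(1)])
  have mA2: "measure B2 A' = measure B2 A" unfolding A'_def by (rule measure_restrict_null[OF s2 f2 n2 O A(1)])
  obtain K where K: "K \<subseteq> A'" "compact K" "measure B1 A' < measure B1 K + c0 / 4"
    using inner_approx[OF s1 f1 sA', of "c0 / 4"] c0 by (auto simp: c0_def)
  have sK: "K \<in> sets borel" using K by (simp add: compact_imp_closed)
  have "measure B2 K \<le> measure B2 A'" by (rule B2.finite_measure_mono) (use K sA' s2 in auto)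
  define c where "c = measure B1 K - measure B2 K"
  have h1: "measure B1 K - measure B2 K > measure B1 A' - c0 / 4 - measure B2 A'"
    using K(3) \<open>measure B2 K \<le> measure B2 A'\<close> by linarith
  have h2: "c0 = measure B1 A' - measure B2 A'" using mA1 mA2 by (simp add: c0_def)
  have h3: "c0 > 0" using c0 by (simp add: c0_def)
  have c: "c > 0" using h1 h2 h3 unfolding c_def by linarith
  have Kne: "K \<noteq> {}" using c by (auto simp: c_def)
  have KO: "K \<subseteq> \<Omega>" using K(1) by (auto simp: A'_def)
  have KD: "K \<inter> D = {}" using K(1) A(2) by (auto simp: A'_def)
  obtain Lr where Lr: "liminf (\<lambda>k. Fk B1 B2 \<Omega> \<theta> (\<epsilon> k) (r k)) = ennreal Lr" "0 \<le> Lr"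
    using L by (cases "liminf (\<lambda>k. Fk B1 B2 \<Omega> \<theta> (\<epsilon> k) (r k))") auto
  define T where "T = 2 * Lr / c + 1"
  have "2 * Lr / c \<ge> 0" using Lr c by simp
  then have T: "T > 0" by (simp add: T_def)
  define \<eta> where "\<eta> = T powr (1 / (\<theta> - 1))"
  have \<eta>: "\<eta> > 0" using T by (simp add: \<eta>_def)
  have \<eta>T: "\<eta> powr (\<theta> - 1) = T" using T \<theta> by (simp add: \<eta>_def powr_powr)
  obtain E where E: "finite E" "E \<subseteq> D" "measure B1 (D - E) < \<eta> / 2" "measure B2 (D - E) < \<eta> / 2"
    using finite_approx_atoms[OF s1 f1 s2 f2 D, of "\<eta> / 2"] \<eta> by auto
  have sD: "D - E \<in> sets borel" using D by (simp add: sets.countable)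
  have sm: "measure B ({z} - E) < \<eta> / 2"
    if sB: "sets B = sets borel" and fB: "finite_measure B" and BD: "measure B (D - E) < \<eta> / 2"
      and Bz: "\<And>z. z \<notin> D \<Longrightarrow> measure B {z} = 0" for B :: "'a measure" and z
  proof -
    interpret finite_measure B by fact
    consider "z \<in> E" | "z \<in> D - E" | "z \<notin> D" by blast
    then show ?thesis
    proof cases
      case 1 then show ?thesis using \<eta> by simp
    next
      case 2
      then have "measure B ({z} - E) \<le> measure B (D - E)"
        by (intro finite_measure_mono) (use sD sB in auto)
      then show ?thesis using BD by linarith
    next
      case 3
      have "measure B ({z} - E) \<le> measure B {z}"
        by (intro finite_measure_mono) (use sB in auto)
      then show ?thesis using Bz[OF 3] \<eta> by simp
    qed
  qed
  have sm1: "\<And>z. measure B1 ({z} - E) < \<eta> / 2" using sm[OF s1 f1 E(3)] Dz by blast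
  have sm2: "\<And>z. measure B2 ({z} - E) < \<eta> / 2" using sm[OF s2 f2 E(4)] Dz by blast
  have EK: "E \<inter> K = {}" using E(2) KD by auto
  obtain N where N: "\<And>k. k \<ge> N \<Longrightarrow> ennreal (\<eta> powr (\<theta> - 1) * (c / 2)) \<le> Fk B1 B2 \<Omega> \<theta> (\<epsilon> k) (r k)"
    using diffuse_eventually[OF s1 f1 s2 f2 n1 n2 \<Omega> K(2) Kne KO E(1) EK \<eta> sm1 sm2 c_def c \<theta> r re e0] by blast
  have "ennreal (\<eta> powr (\<theta> - 1) * (c / 2)) \<le> liminf (\<lambda>k. Fk B1 B2 \<Omega> \<theta> (\<epsilon> k) (r k))"
    by (rule Liminf_bounded) (use N in \<open>auto simp: eventually_sequentially\<close>)
  then have "\<eta> powr (\<theta> - 1) * (c / 2) \<le> Lr" using Lr by (simp add: ennreal_le_iff)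
  moreover have "\<eta> powr (\<theta> - 1) * (c / 2) = Lr + c / 2" using c by (simp add: \<eta>T T_def field_simps)
  ultimately show False using c by linarith
qed

theorem lemma2p3:
  fixes \<Omega> :: "'a::euclidean_space set"
    and M1 M2 :: "'a measure"
    and \<theta> :: real
    and r \<epsilon> :: "nat \<Rightarrow> real"
  assumes "open \<Omega>" and "bounded \<Omega>"
    and "sets M1 = sets (restrict_space borel \<Omega>)" and "finite_measure M1"
    and "sets M2 = sets (restrict_space borel \<Omega>)" and "finite_measure M2"
    and "0 < \<theta>" and "\<theta> < 1"
    and "\<And>k. 0 < sqrt (real DIM('a)) * r k"
    and "\<And>k. sqrt (real DIM('a)) * r k \<le> \<epsilon> k"
    and "decseq \<epsilon>" and "\<epsilon> \<longlonglongrightarrow> 0"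
    and "liminf (\<lambda>k. \<integral>\<^sup>+ x \<in> inner_set \<Omega> (\<epsilon> k).
           ennreal (\<bar>signed_meas M1 M2 (cube x (r k))\<bar> powr \<theta> / r k ^ DIM('a)) \<partial>lborel) < \<infinity>"
  shows "\<exists>S m. countable S \<and> S \<subseteq> \<Omega> \<and> (\<forall>x\<in>S. m x \<noteq> (0::real))
           \<and> m summable_on S
           \<and> (\<forall>A \<in> sets (restrict_space borel \<Omega>). signed_meas M1 M2 A = infsum m (S \<inter> A))
           \<and> (\<integral>\<^sup>+ x. ennreal (\<bar>m x\<bar> powr \<theta>) \<partial>count_space S)
               \<le> liminf (\<lambda>k. \<integral>\<^sup>+ x \<in> inner_set \<Omega> (\<epsilon> k).
                  ennreal (\<bar>signed_meas M1 M2 (cube x (r k))\<bar> powr \<theta> / r k ^ DIM('a)) \<partial>lborel)"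
proof -
  note \<Omega> = assms(1,2)
  note \<theta> = assms(7,8)
  have O: "\<Omega> \<in> sets borel" using \<Omega> by simp
  define B1 where "B1 = distr M1 borel (\<lambda>x. x)"
  define B2 where "B2 = distr M2 borel (\<lambda>x. x)"
  note d1 = distr_facts[OF assms(3,4) O, folded B1_def]
  note d2 = distr_facts[OF assms(5,6) O, folded B2_def]
  have s1: "sets B1 = sets borel" and f1: "finite_measure B1" and n1: "emeasure B1 (UNIV - \<Omega>) = 0"
    using d1 by auto
  have s2: "sets B2 = sets borel" and f2: "finite_measure B2" and n2: "emeasure B2 (UNIV - \<Omega>) = 0"
    using d2 by auto
  interpret B1: finite_measure B1 by fact
  interpret B2: finite_measure B2 by fact
  have r: "\<And>k. 0 < r k" using assms(9) by (simp add: zero_less_mult_iff)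
  note re = assms(10) and e0 = assms(12)
  have mB1: "measure B1 A = measure M1 A" if "A \<in> sets borel" "A \<subseteq> \<Omega>" for A
    using d1(3)[OF that(1)] that(2) by (simp add: Int_absorb2)
  have mB2: "measure B2 A = measure M2 A" if "A \<in> sets borel" "A \<subseteq> \<Omega>" for A
    using d2(3)[OF that(1)] that(2) by (simp add: Int_absorb2)
  let ?F = "\<lambda>k. \<integral>\<^sup>+ x \<in> inner_set \<Omega> (\<epsilon> k).
           ennreal (\<bar>signed_meas M1 M2 (cube x (r k))\<bar> powr \<theta> / r k ^ DIM('a)) \<partial>lborel"
  have Feq: "?F = (\<lambda>k. Fk B1 B2 \<Omega> \<theta> (\<epsilon> k) (r k))"
  proof
    fix k
    show "?F k = Fk B1 B2 \<Omega> \<theta> (\<epsilon> k) (r k)"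
      unfolding Fk_def
    proof (rule nn_integral_cong)
      fix x
      show "ennreal (\<bar>signed_meas M1 M2 (cube x (r k))\<bar> powr \<theta> / r k ^ DIM('a)) * indicator (inner_set \<Omega> (\<epsilon> k)) x =
        ennreal (\<bar>measure B1 (cube x (r k)) - measure B2 (cube x (r k))\<bar> powr \<theta> / r k ^ DIM('a)) * indicator (inner_set \<Omega> (\<epsilon> k)) x"
      proof (cases "x \<in> inner_set \<Omega> (\<epsilon> k)")
        case True
        have "cube x (r k) \<subseteq> \<Omega>" by (rule cube_subset_inner[OF True re])
        then show ?thesis using mB1[of "cube x (r k)"] mB2[of "cube x (r k)"]
          by (simp add: signed_meas_def)
      qed simp
    qed
  qed
  have L: "liminf (\<lambda>k. Fk B1 B2 \<Omega> \<theta> (\<epsilon> k) (r k)) < \<infinity>" using assms(13) Feq by simp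
  define D where "D = {z. measure B1 {z} \<noteq> 0} \<union> {z. measure B2 {z} \<noteq> 0}"
  have D: "countable D" unfolding D_def using B1.countable_support B2.countable_support by simp
  have Dz: "\<And>z. z \<notin> D \<Longrightarrow> measure B1 {z} = 0 \<and> measure B2 {z} = 0" by (auto simp: D_def)
  have Dz': "\<And>z. z \<notin> D \<Longrightarrow> measure B2 {z} = 0 \<and> measure B1 {z} = 0" using Dz by blast
  have L': "liminf (\<lambda>k. Fk B2 B1 \<Omega> \<theta> (\<epsilon> k) (r k)) < \<infinity>" using L by (simp add: Fk_swap)
  have diffuse0: "measure B1 A - measure B2 A = 0" if "A \<in> sets borel" "A \<inter> D = {}" for A
    using diffuse_zero_pos[OF s1 f1 s2 f2 n1 n2 \<Omega> \<theta> r re e0 D Dz L that]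
      diffuse_zero_pos[OF s2 f2 s1 f1 n2 n1 \<Omega> \<theta> r re e0 D Dz' L' that] by linarith
  define m where "m z = measure B1 {z} - measure B2 {z}" for z
  define S where "S = {z \<in> \<Omega>. m z \<noteq> 0}"
  have SD: "S \<subseteq> D" by (auto simp: S_def D_def m_def)
  have cS: "countable S" using countable_subset[OF SD D] .
  have su1: "(\<lambda>z. measure B1 {z}) summable_on C" if "C \<subseteq> D" for C
    using summable_on_subset_banach[OF countable_additivity(1)[OF s1 f1 D] that] .
  have su2: "(\<lambda>z. measure B2 {z}) summable_on C" if "C \<subseteq> D" for C
    using summable_on_subset_banach[OF countable_additivity(1)[OF s2 f2 D] that] .
  have hs: "(m has_sum (measure B1 C - measure B2 C)) C" if "C \<subseteq> D" for C
  proof -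
    have cC: "countable C" using countable_subset[OF that D] .
    have "((\<lambda>z. measure B1 {z}) has_sum measure B1 C) C"
      using has_sum_infsum[OF su1[OF that]] countable_additivity(2)[OF s1 f1 cC] by simp
    moreover have "((\<lambda>z. measure B2 {z}) has_sum measure B2 C) C"
      using has_sum_infsum[OF su2[OF that]] countable_additivity(2)[OF s2 f2 cC] by simp
    ultimately show ?thesis unfolding m_def by (rule has_sum_diff_real)
  qed
  have msum: "m summable_on S" using hs[OF SD] summable_on_def by blast
  have repr: "signed_meas M1 M2 A = infsum m (S \<inter> A)" if A: "A \<in> sets (restrict_space borel \<Omega>)" for A
  proof -
    have A': "A \<subseteq> \<Omega>" "A \<in> sets borel" using A O by (auto simp: sets_restrict_space_iff)
    have "signed_meas M1 M2 A = measure B1 A - measure B2 A"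
      using mB1[OF A'(2,1)] mB2[OF A'(2,1)] by (simp add: signed_meas_def)
    also have "\<dots> = (measure B1 (A \<inter> D) - measure B2 (A \<inter> D)) + (measure B1 (A - D) - measure B2 (A - D))"
    proof -
      have sAD: "A \<inter> D \<in> sets borel" using A'(2) D by (simp add: sets.countable)
      have "A - D = A - (A \<inter> D)" by auto
      then have "measure B1 (A - D) = measure B1 A - measure B1 (A \<inter> D)"
        "measure B2 (A - D) = measure B2 A - measure B2 (A \<inter> D)"
        using B1.finite_measure_Diff[of A "A \<inter> D"] B2.finite_measure_Diff[of A "A \<inter> D"] A'(2) sAD s1 s2
        by auto
      then show ?thesis by simp
    qed
    also have "measure B1 (A - D) - measure B2 (A - D) = 0"
      by (rule diffuse0) (use A'(2) D in \<open>auto simp: sets.countable\<close>)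
    also have "measure B1 (A \<inter> D) - measure B2 (A \<inter> D) = infsum m (A \<inter> D)"
      using infsumI[OF hs[of "A \<inter> D"]] by auto
    also have "infsum m (A \<inter> D) = infsum m (S \<inter> A)"
      by (rule infsum_cong_neutral) (use A'(1) SD in \<open>auto simp: S_def\<close>)
    finally show ?thesis by simp
  qed
  obtain Lr where Lr: "liminf (\<lambda>k. Fk B1 B2 \<Omega> \<theta> (\<epsilon> k) (r k)) = ennreal Lr" "0 \<le> Lr"
    using L by (cases "liminf (\<lambda>k. Fk B1 B2 \<Omega> \<theta> (\<epsilon> k) (r k))") auto
  have fin: "(\<Sum>e\<in>E. \<bar>m e\<bar> powr \<theta>) \<le> Lr" if E: "finite E" "E \<subseteq> S" for E
  proof (rule field_le_mult_one_interval)
    fix z :: real assume z: "0 < z" "z < 1"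
    define lam where "lam = z powr (1 / \<theta>)"
    have lam: "0 < lam" "lam < 1" using z \<theta> powr_less_mono2[of "1 / \<theta>" z 1] by (auto simp: lam_def)
    have lz: "lam powr \<theta> = z" using z \<theta> by (simp add: lam_def powr_powr)
    have ES: "E \<subseteq> \<Omega>" using E(2) by (auto simp: S_def)
    obtain N where N: "\<And>k. k \<ge> N \<Longrightarrow> ennreal (lam powr \<theta> * (\<Sum>e\<in>E. \<bar>m e\<bar> powr \<theta>)) \<le> Fk B1 B2 \<Omega> \<theta> (\<epsilon> k) (r k)"
      using atoms_eventually[OF s1 f1 s2 f2 \<Omega> E(1) ES \<theta>(1) lam r re e0, of m] by (auto simp: m_def)
    have "ennreal (lam powr \<theta> * (\<Sum>e\<in>E. \<bar>m e\<bar> powr \<theta>)) \<le> liminf (\<lambda>k. Fk B1 B2 \<Omega> \<theta> (\<epsilon> k) (r k))"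
      by (rule Liminf_bounded) (use N in \<open>auto simp: eventually_sequentially\<close>)
    then show "z * (\<Sum>e\<in>E. \<bar>m e\<bar> powr \<theta>) \<le> Lr" using Lr lz by (simp add: ennreal_le_iff)
  qed
  have hsum: "(\<lambda>x. \<bar>m x\<bar> powr \<theta>) summable_on S"
    by (rule nonneg_bdd_above_summable_on) (use fin in \<open>auto simp: bdd_above_def\<close>)
  have "infsum (\<lambda>x. \<bar>m x\<bar> powr \<theta>) S \<le> Lr"
    by (rule infsum_le_finite_sums[OF hsum]) (use fin in auto)
  then have energy: "(\<integral>\<^sup>+ x. ennreal (\<bar>m x\<bar> powr \<theta>) \<partial>count_space S) \<le> liminf ?F"
    using nn_integral_count_space_summable[OF hsum] Lr Feq by (simp add: ennreal_leI)
  show ?thesis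
  proof (intro exI conjI)
    show "countable S" by fact
    show "S \<subseteq> \<Omega>" by (auto simp: S_def)
    show "\<forall>x\<in>S. m x \<noteq> 0" by (auto simp: S_def)
    show "m summable_on S" by fact
    show "\<forall>A\<in>sets (restrict_space borel \<Omega>). signed_meas M1 M2 A = infsum m (S \<inter> A)" using repr by blast
    show "(\<integral>\<^sup>+ x. ennreal (\<bar>m x\<bar> powr \<theta>) \<partial>count_space S) \<le> liminf ?F" by (rule energy)
  qed
qed

end
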